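(* Let $A\in\mathbb{R}^{m\times N}$ and $K\subseteq[N]$. The following are equivalent: (i) $\ker(A)\cap N_K\cap H_K=\{0\}$; (ii) $\mathbb{1}_K$ is the unique solution of $(P_{\mathrm{bin}})$ with $b=A\mathbb{1}_K$. Moreover, if one of these holds, then $\mathbb{1}_K$ is the unique vector of minimal $\|\cdot\|_0$ among all $x\in\{0,1\}^N$ with $Ax=A\mathbb{1}_K$.
   Context: $[N]=\{1,\dots,N\}$; $\mathbb{1}_K$ is the vector with entries $1$ on $K$ and $0$ elsewhere; $K^C=[N]\setminus K$; for $w\in\mathbb{R}^N$ and $S\subseteq[N]$, $w_S$ denotes the vector agreeing with $w$ on $S$ and zero elsewhere; $\|x\|_0$ is the number of nonzero entries. $N_K=\{w\in\mathbb{R}^N:\|w_K\|_1\ge\|w_{K^C}\|_1\}$ and $H_K=\{w\in\mathbb{R}^N: w_i\le 0 \text{ for } i\in K,\ w_i\ge 0\text{ for } i\in K^C\}$. $(P_{\mathrm{bin}})$ is the program $\min\|x\|_1$ subject to $Ax=b$ and $x\in[0,1]^N$; "unique solution" means unique minimizer. *)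

theory Defs
  imports "HOL-Analysis.Analysis"
begin

text \<open>Vectors in R^N are real^'n with a finite index type 'n (N = CARD('n)),
  matrices A in R^(m x N) are real^'n^'m.\<close>

definition ind_vec :: "'n::finite set \<Rightarrow> real^'n" where
  "ind_vec K = (\<chi> i. if i \<in> K then 1 else 0)"

definition l1norm :: "real^'n::finite \<Rightarrow> real" where
  "l1norm x = (\<Sum>i\<in>UNIV. \<bar>x $ i\<bar>)"

definition restrict_vec :: "real^'n::finite \<Rightarrow> 'n set \<Rightarrow> real^'n" where
  "restrict_vec w S = (\<chi> i. if i \<in> S then w $ i else 0)"

definition l0norm :: "real^'n::finite \<Rightarrow> nat" where
  "l0norm x = card {i. x $ i \<noteq> 0}"

definition NK :: "'n::finite set \<Rightarrow> (real^'n) set" where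
  "NK K = {w. l1norm (restrict_vec w K) \<ge> l1norm (restrict_vec w (- K))}"

definition HK :: "'n::finite set \<Rightarrow> (real^'n) set" where
  "HK K = {w. (\<forall>i\<in>K. w $ i \<le> 0) \<and> (\<forall>i\<in>- K. w $ i \<ge> 0)}"

definition matrix_kernel :: "real^'n::finite^'m::finite \<Rightarrow> (real^'n) set" where
  "matrix_kernel A = {x. A *v x = 0}"

definition Pbin_feasible :: "real^'n::finite^'m::finite \<Rightarrow> real^'m \<Rightarrow> (real^'n) set" where
  "Pbin_feasible A b = {x. A *v x = b \<and> (\<forall>i. 0 \<le> x $ i \<and> x $ i \<le> 1)}"

definition Pbin_unique_solution :: "real^'n::finite^'m::finite \<Rightarrow> real^'m \<Rightarrow> real^'n \<Rightarrow> bool" where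
  "Pbin_unique_solution A b x \<longleftrightarrow> x \<in> Pbin_feasible A b \<and>
     (\<forall>y\<in>Pbin_feasible A b. y \<noteq> x \<longrightarrow> l1norm x < l1norm y)"

end

theory Submission
  imports Defs
begin

lemma l1_e: "l1norm (ind_vec (K::'n::finite set)) = real (card K)"
  unfolding l1norm_def ind_vec_def
  by (simp add: if_distrib sum.If_cases)

lemma key:
  fixes w :: "real^'n::finite"
  assumes "w \<in> HK K" "\<forall>i\<in>K. w$i \<ge> -1"
  shows "l1norm (ind_vec K + w) = l1norm (ind_vec K) - l1norm (restrict_vec w K) + l1norm (restrict_vec w (-K))"
proof -
  have "l1norm (ind_vec K) - l1norm (restrict_vec w K) + l1norm (restrict_vec w (-K))
     = (\<Sum>i\<in>UNIV. \<bar>ind_vec K $ i\<bar> - \<bar>restrict_vec w K $ i\<bar> + \<bar>restrict_vec w (-K) $ i\<bar>)"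
    unfolding l1norm_def by (simp add: sum.distrib sum_subtractf)
  also have "\<dots> = (\<Sum>i\<in>UNIV. \<bar>(ind_vec K + w) $ i\<bar>)"
  proof (rule sum.cong)
    fix i assume "i \<in> (UNIV::'n set)"
    show "\<bar>ind_vec K $ i\<bar> - \<bar>restrict_vec w K $ i\<bar> + \<bar>restrict_vec w (-K) $ i\<bar> = \<bar>(ind_vec K + w) $ i\<bar>"
      using assms unfolding HK_def ind_vec_def restrict_vec_def by (cases "i \<in> K") auto
  qed simp
  finally show ?thesis unfolding l1norm_def by simp
qed

lemma l1_scale: "l1norm (restrict_vec (c *\<^sub>R w) S) = \<bar>c\<bar> * l1norm (restrict_vec w S)"
  unfolding l1norm_def restrict_vec_def
  by (simp add: sum_distrib_left abs_mult if_distrib cong: if_cong)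

lemma l1_nonneg: "l1norm x \<ge> 0"
  unfolding l1norm_def by (simp add: sum_nonneg)

lemma abs_le_l1: "\<bar>x $ i\<bar> \<le> l1norm x"
  unfolding l1norm_def
  by (rule member_le_sum[of i UNIV "\<lambda>i. \<bar>x $ i\<bar>", simplified])

lemma dir1:
  fixes A :: "real^'n::finite^'m::finite"
  assumes h: "matrix_kernel A \<inter> NK K \<inter> HK K = {0}"
  shows "Pbin_unique_solution A (A *v ind_vec K) (ind_vec K)"
  unfolding Pbin_unique_solution_def
proof safe
  show "ind_vec K \<in> Pbin_feasible A (A *v ind_vec K)"
    unfolding Pbin_feasible_def ind_vec_def by auto
  fix y assume y: "y \<in> Pbin_feasible A (A *v ind_vec K)" and ne: "y \<noteq> ind_vec K"
  define w where "w = y - ind_vec K"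
  have yw: "y = ind_vec K + w" unfolding w_def by simp
  have wne: "w \<noteq> 0" using ne unfolding w_def by simp
  have wk: "w \<in> matrix_kernel A" using y unfolding w_def matrix_kernel_def Pbin_feasible_def
    by (simp add: matrix_vector_mult_diff_distrib)
  have wh: "w \<in> HK K" using y unfolding w_def HK_def Pbin_feasible_def ind_vec_def by auto
  have wb: "\<forall>i\<in>K. w$i \<ge> -1" using y unfolding w_def Pbin_feasible_def ind_vec_def by auto
  have "w \<notin> NK K" using h wk wh wne by blast
  hence "l1norm (restrict_vec w K) < l1norm (restrict_vec w (-K))" unfolding NK_def by simp
  thus "l1norm (ind_vec K) < l1norm y" using key[OF wh wb] yw by simp
qed

lemma dir2:
  fixes A :: "real^'n::finite^'m::finite"
  assumes h: "Pbin_unique_solution A (A *v ind_vec K) (ind_vec K)"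
  shows "matrix_kernel A \<inter> NK K \<inter> HK K = {0}"
proof (rule ccontr)
  assume "matrix_kernel A \<inter> NK K \<inter> HK K \<noteq> {0}"
  moreover have "0 \<in> matrix_kernel A \<inter> NK K \<inter> HK K"
    unfolding matrix_kernel_def NK_def HK_def restrict_vec_def l1norm_def by (simp add: if_distrib cong: if_cong)
  ultimately obtain w where wk: "w \<in> matrix_kernel A" and wn: "w \<in> NK K" and wh: "w \<in> HK K"
    and wne: "w \<noteq> 0" by blast
  define t where "t = 1 / (1 + l1norm w)"
  have tpos: "t > 0" unfolding t_def using l1_nonneg[of w] by simp
  have tb: "\<bar>t * w $ i\<bar> \<le> 1" for i
  proof -
    have "\<bar>t * w $ i\<bar> = \<bar>w $ i\<bar> / (1 + l1norm w)" unfolding t_def using l1_nonneg[of w]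
      by (simp add: abs_mult)
    also have "\<dots> \<le> 1" using abs_le_l1[of w i] l1_nonneg[of w] by simp
    finally show ?thesis .
  qed
  define v where "v = t *\<^sub>R w"
  have vh: "v \<in> HK K" using wh tpos unfolding v_def HK_def
    by (auto simp: mult_nonneg_nonneg mult_nonneg_nonpos)
  have vb: "\<forall>i\<in>K. v$i \<ge> -1" using tb unfolding v_def by (auto simp: abs_le_iff)
  have vn: "l1norm (restrict_vec v K) \<ge> l1norm (restrict_vec v (-K))"
    using wn tpos unfolding v_def NK_def l1_scale by simp
  have vne: "v \<noteq> 0" using wne tpos unfolding v_def by simp
  define y where "y = ind_vec K + v"
  have yf: "y \<in> Pbin_feasible A (A *v ind_vec K)"
    unfolding Pbin_feasible_def
  proof safe
    show "A *v y = A *v ind_vec K" using wk unfolding y_def v_def matrix_kernel_def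
      by (simp add: matrix_vector_right_distrib matrix_vector_mult_scaleR)
    fix i
    show "0 \<le> y $ i" "y $ i \<le> 1" using vh vb unfolding y_def HK_def ind_vec_def
      using tb[of i] unfolding v_def by (cases "i \<in> K"; auto simp: abs_le_iff)+
  qed
  have "y \<noteq> ind_vec K" using vne unfolding y_def by simp
  hence "l1norm (ind_vec K) < l1norm y" using h yf unfolding Pbin_unique_solution_def by blast
  thus False using key[OF vh vb] vn unfolding y_def by simp
qed

lemma l1_bin:
  assumes "\<forall>i. x $ i \<in> {0, 1}"
  shows "l1norm x = real (l0norm x)"
proof -
  have "l1norm x = (\<Sum>i\<in>UNIV. if x $ i \<noteq> 0 then 1 else 0)"
    unfolding l1norm_def using assms by (intro sum.cong) auto
  also have "\<dots> = real (card {i. x $ i \<noteq> 0})"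
    by (simp add: sum.If_cases)
  finally show ?thesis unfolding l0norm_def .
qed

theorem theorem2p3:
  fixes A :: "real^'n::finite^'m::finite" and K :: "'n set"
  shows "(matrix_kernel A \<inter> NK K \<inter> HK K = {0}
            \<longleftrightarrow> Pbin_unique_solution A (A *v ind_vec K) (ind_vec K))
       \<and> ((matrix_kernel A \<inter> NK K \<inter> HK K = {0}
            \<or> Pbin_unique_solution A (A *v ind_vec K) (ind_vec K))
          \<longrightarrow> (\<forall>x::real^'n. (\<forall>i. x $ i \<in> {0, 1}) \<and> A *v x = A *v ind_vec K \<and> x \<noteq> ind_vec K
                 \<longrightarrow> l0norm (ind_vec K) < l0norm x))"
proof (intro conjI impI allI)
  show "(matrix_kernel A \<inter> NK K \<inter> HK K = {0}) = Pbin_unique_solution A (A *v ind_vec K) (ind_vec K)"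
    using dir1 dir2 by blast
  fix x :: "real^'n"
  assume "matrix_kernel A \<inter> NK K \<inter> HK K = {0} \<or> Pbin_unique_solution A (A *v ind_vec K) (ind_vec K)"
  hence u: "Pbin_unique_solution A (A *v ind_vec K) (ind_vec K)" using dir1 by blast
  assume x: "(\<forall>i. x $ i \<in> {0, 1}) \<and> A *v x = A *v ind_vec K \<and> x \<noteq> ind_vec K"
  have "0 \<le> x $ i \<and> x $ i \<le> 1" for i using x[THEN conjunct1, rule_format, of i] by auto
  hence "x \<in> Pbin_feasible A (A *v ind_vec K)" using x unfolding Pbin_feasible_def by blast
  hence "l1norm (ind_vec K) < l1norm x" using u x unfolding Pbin_unique_solution_def by blast
  moreover have "\<forall>i. ind_vec K $ i \<in> {0, 1}" unfolding ind_vec_def by simp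
  ultimately show "l0norm (ind_vec K) < l0norm x" using l1_bin[of x] l1_bin[of "ind_vec K"] x by simp
qed

end
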